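(* Let $(\Delta,U,\mu_\Delta)$ be an expanding Young tower with $\mu_\Delta(\Delta_n)\le C\rho^n$. There exists $C>0$ such that for every finite $F\subset\mathbb N$ and all positive integers $(n_i)_{i\in F}$, $$\mu_\Delta\big(\{x\in\Delta_0:\forall i\in F,\ \phi(U_0^ix)=n_i\}\big)\le\prod_{i\in F}(C\rho^{n_i}).$$
   Context: Expanding Young tower: probability space $(\Delta,\mu_\Delta)$, measure-preserving $U$, partition $\{\Delta_{k,p}\}_{0\le k<r_p}$ with $U:\Delta_{k,p}\to\Delta_{k+1,p}$ and $U:\Delta_{r_p-1,p}\to\Delta_0=\bigcup_m\Delta_{0,m}$ measurable isomorphisms, and bounded distortion $|1-J(x)/J(y)|\le C\beta^{s(Ux,Uy)}$ for the inverse Jacobian $J$ of $U$ and $x,y$ in a common partition element ($s$ the separation time counted in returns to the basis). $\Delta_n=\bigcup_p\Delta_{n,p}$. $\phi$ is the first return time to $\Delta_0$ and $U_0=U^\phi$ the induced map on $\Delta_0$. *)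

theory Defs
  imports "HOL-Probability.Probability"
begin

text \<open>Tower data: probability measure M on 'a, map U, index set P of basis elements,
  heights r p, sets D k p for the element of level k above basis element p,
  inverse Jacobian J.\<close>

definition base :: "nat set \<Rightarrow> (nat \<Rightarrow> nat \<Rightarrow> 'a set) \<Rightarrow> 'a set" where
  "base P D = (\<Union>p\<in>P. D 0 p)"

definition level :: "nat set \<Rightarrow> (nat \<Rightarrow> nat) \<Rightarrow> (nat \<Rightarrow> nat \<Rightarrow> 'a set) \<Rightarrow> nat \<Rightarrow> 'a set" where
  "level P r D n = (\<Union>p\<in>{p\<in>P. n < r p}. D n p)"

definition same_elt :: "nat set \<Rightarrow> (nat \<Rightarrow> nat) \<Rightarrow> (nat \<Rightarrow> nat \<Rightarrow> 'a set) \<Rightarrow> 'a \<Rightarrow> 'a \<Rightarrow> bool" where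
  "same_elt P r D x y = (\<exists>p\<in>P. \<exists>k<r p. x \<in> D k p \<and> y \<in> D k p)"

text \<open>Separation time, counted in returns to the basis: the number of times j < N
  with U^j x in the basis, where N is the first time U^j x and U^j y lie in different
  partition elements (infinite if there is no such time).\<close>
definition sep :: "nat set \<Rightarrow> (nat \<Rightarrow> nat) \<Rightarrow> (nat \<Rightarrow> nat \<Rightarrow> 'a set) \<Rightarrow> ('a \<Rightarrow> 'a) \<Rightarrow> 'a \<Rightarrow> 'a \<Rightarrow> enat" where
  "sep P r D U x y =
     (if \<forall>j. same_elt P r D ((U ^^ j) x) ((U ^^ j) y) then \<infinity>
      else enat (card {j. j < (LEAST j. \<not> same_elt P r D ((U ^^ j) x) ((U ^^ j) y))
                          \<and> (U ^^ j) x \<in> base P D}))"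

definition epow :: "real \<Rightarrow> enat \<Rightarrow> real" where
  "epow b s = (case s of enat n \<Rightarrow> b ^ n | \<infinity> \<Rightarrow> 0)"

definition young_tower ::
  "'a measure \<Rightarrow> ('a \<Rightarrow> 'a) \<Rightarrow> nat set \<Rightarrow> (nat \<Rightarrow> nat) \<Rightarrow> (nat \<Rightarrow> nat \<Rightarrow> 'a set) \<Rightarrow> ('a \<Rightarrow> real) \<Rightarrow> bool" where
  "young_tower M U P r D J \<longleftrightarrow>
     prob_space M \<and>
     U \<in> measurable M M \<and> distr M M U = M \<and>
     (\<forall>p\<in>P. 1 \<le> r p) \<and>
     (\<forall>p\<in>P. \<forall>k<r p. D k p \<in> sets M) \<and>
     (\<forall>x\<in>space M. \<exists>!(k, p). p \<in> P \<and> k < r p \<and> x \<in> D k p) \<and>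
     (\<forall>p\<in>P. \<forall>k. Suc k < r p \<longrightarrow> bij_betw U (D k p) (D (Suc k) p)) \<and>
     (\<forall>p\<in>P. bij_betw U (D (r p - 1) p) (base P D)) \<and>
     (\<forall>p\<in>P. \<forall>k<r p. \<forall>A\<in>sets M. A \<subseteq> D k p \<longrightarrow> U ` A \<in> sets M) \<and>
     J \<in> borel_measurable M \<and> (\<forall>x\<in>space M. 0 < J x) \<and>
     (\<forall>p\<in>P. \<forall>k<r p. \<forall>A\<in>sets M. A \<subseteq> D k p \<longrightarrow>
         emeasure M (U ` A) = (\<integral>\<^sup>+ x\<in>A. ennreal (1 / J x) \<partial>M)) \<and>
     (\<exists>C \<beta>. 0 < \<beta> \<and> \<beta> < 1 \<and>
        (\<forall>p\<in>P. \<forall>k<r p. \<forall>x\<in>D k p. \<forall>y\<in>D k p.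
            \<bar>1 - J x / J y\<bar> \<le> C * epow \<beta> (sep P r D U (U x) (U y))))"

definition ret_time :: "('a \<Rightarrow> 'a) \<Rightarrow> 'a set \<Rightarrow> 'a \<Rightarrow> nat" where
  "ret_time U B x = (LEAST n. 0 < n \<and> (U ^^ n) x \<in> B)"

definition induced :: "('a \<Rightarrow> 'a) \<Rightarrow> 'a set \<Rightarrow> 'a \<Rightarrow> 'a" where
  "induced U B x = (U ^^ ret_time U B x) x"

end

theory Submission
  imports Defs
begin

locale tw =
  fixes M :: "'a measure" and U :: "'a \<Rightarrow> 'a" and P :: "nat set" and r :: "nat \<Rightarrow> nat"
    and D :: "nat \<Rightarrow> nat \<Rightarrow> 'a set" and J :: "'a \<Rightarrow> real"
  assumes yt: "young_tower M U P r D J"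
begin

sublocale prob_space M using yt by (simp add: young_tower_def)

abbreviation "B \<equiv> base P D"

lemma Umeas: "U \<in> measurable M M" using yt by (simp add: young_tower_def)
lemma Udistr: "distr M M U = M" using yt by (simp add: young_tower_def)
lemma r_pos: "p \<in> P \<Longrightarrow> 1 \<le> r p" using yt by (simp add: young_tower_def)
lemma Dsets: "p \<in> P \<Longrightarrow> k < r p \<Longrightarrow> D k p \<in> sets M" using yt by (simp add: young_tower_def)
lemma Dspace: "p \<in> P \<Longrightarrow> k < r p \<Longrightarrow> D k p \<subseteq> space M" using Dsets sets.sets_into_space by blast
lemma part: "x \<in> space M \<Longrightarrow> \<exists>!(k, p). p \<in> P \<and> k < r p \<and> x \<in> D k p" using yt by (simp add: young_tower_def)
lemma bij_up: "p \<in> P \<Longrightarrow> Suc k < r p \<Longrightarrow> bij_betw U (D k p) (D (Suc k) p)" using yt by (simp add: young_tower_def)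
lemma bij_top: "p \<in> P \<Longrightarrow> bij_betw U (D (r p - 1) p) B" using yt by (simp add: young_tower_def)
lemma jac: "p \<in> P \<Longrightarrow> k < r p \<Longrightarrow> A \<in> sets M \<Longrightarrow> A \<subseteq> D k p \<Longrightarrow>
         emeasure M (U ` A) = (\<integral>\<^sup>+ x\<in>A. ennreal (1 / J x) \<partial>M)" using yt by (simp add: young_tower_def)
lemma Jpos: "x \<in> space M \<Longrightarrow> 0 < J x" using yt by (simp add: young_tower_def)
lemma Jmeas: "J \<in> borel_measurable M" using yt by (simp add: young_tower_def)

lemma distortion: obtains c where "c \<ge> 0" "\<And>p k x y. p \<in> P \<Longrightarrow> k < r p \<Longrightarrow> x \<in> D k p \<Longrightarrow> y \<in> D k p \<Longrightarrow> J x \<le> (1 + c) * J y"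
proof -
  obtain C \<beta> where b: "0 < \<beta>" "\<beta> < 1" and d: "\<forall>p\<in>P. \<forall>k<r p. \<forall>x\<in>D k p. \<forall>y\<in>D k p.
            \<bar>1 - J x / J y\<bar> \<le> C * epow \<beta> (sep P r D U (U x) (U y))"
  proof -
    have "\<exists>C \<beta>. 0 < \<beta> \<and> \<beta> < 1 \<and> (\<forall>p\<in>P. \<forall>k<r p. \<forall>x\<in>D k p. \<forall>y\<in>D k p.
            \<bar>1 - J x / J y\<bar> \<le> C * epow \<beta> (sep P r D U (U x) (U y)))"
      using yt unfolding young_tower_def by (elim conjE) assumption
    then show ?thesis using that by blast
  qed
  have e: "0 \<le> epow \<beta> s \<and> epow \<beta> s \<le> 1" for s
    using b by (cases s) (auto simp: epow_def power_le_one)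
  show ?thesis
  proof (rule that[of "\<bar>C\<bar>"])
    fix p k x y assume h: "p \<in> P" "k < r p" "x \<in> D k p" "y \<in> D k p"
    define s where "s = epow \<beta> (sep P r D U (U x) (U y))"
    have dd: "\<bar>1 - J x / J y\<bar> \<le> C * s" unfolding s_def using d h by blast
    have "C * s \<le> \<bar>C\<bar>" using e[of "sep P r D U (U x) (U y)"] unfolding s_def[symmetric]
      by (metis abs_ge_self abs_mult abs_of_nonneg mult.right_neutral mult_left_mono order_trans abs_ge_zero)
    then have a: "J x / J y \<le> 1 + \<bar>C\<bar>" using dd by linarith
    have "J y > 0" using Jpos Dspace h by blast
    then show "J x \<le> (1 + \<bar>C\<bar>) * J y" using a by (simp add: divide_le_eq)
  qed simp
qed

lemma uniq: "p \<in> P \<Longrightarrow> k < r p \<Longrightarrow> q \<in> P \<Longrightarrow> j < r q \<Longrightarrow> x \<in> D k p \<Longrightarrow> x \<in> D j q \<Longrightarrow> k = j \<and> p = q"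
proof -
  assume h: "p \<in> P" "k < r p" "q \<in> P" "j < r q" "x \<in> D k p" "x \<in> D j q"
  let ?Q = "\<lambda>z. case z of (k, p) \<Rightarrow> p \<in> P \<and> k < r p \<and> x \<in> D k p"
  have "x \<in> space M" using Dspace h by blast
  then have "\<exists>!z. ?Q z" using part by blast
  then obtain z where z: "\<And>y. ?Q y \<Longrightarrow> y = z" by (metis (no_types, lifting) ex1E)
  have "(k, p) = z" by (rule z) (simp add: h)
  moreover have "(j, q) = z" by (rule z) (simp add: h)
  ultimately show "k = j \<and> p = q" by (metis Pair_inject)
qed

lemma D0sets: "p \<in> P \<Longrightarrow> D 0 p \<in> sets M" using Dsets[of p 0] r_pos[of p] by simp
lemma B_sets: "B \<in> sets M"
  unfolding base_def by (rule sets.countable_UN'') (auto intro: D0sets)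
lemma B_space: "B \<subseteq> space M" using B_sets by (rule sets.sets_into_space)
lemma U_space: "x \<in> space M \<Longrightarrow> U x \<in> space M" using Umeas by (rule measurable_space)

lemma funpow_meas: "(U ^^ k) \<in> measurable M M"
  by (induction k) (auto intro: measurable_compose[OF _ Umeas])

lemma funpow_space: "x \<in> space M \<Longrightarrow> (U ^^ k) x \<in> space M"
  using funpow_meas[of k] by (rule measurable_space)

lemma funpow_pres: "X \<in> sets M \<Longrightarrow> emeasure M ((U ^^ k) -` X \<inter> space M) = emeasure M X"
proof (induction k arbitrary: X)
  case 0 then show ?case using sets.sets_into_space by (auto simp: Int_absorb2)
next
  case (Suc k)
  have e: "(U ^^ Suc k) -` X \<inter> space M = (U ^^ k) -` (U -` X \<inter> space M) \<inter> space M"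
    using funpow_space[of _ k] by auto
  have s: "U -` X \<inter> space M \<in> sets M" using Suc.prems Umeas by (rule measurable_sets[rotated])
  have "emeasure M (U -` X \<inter> space M) = emeasure M X"
    using emeasure_distr[OF Umeas Suc.prems] Udistr by simp
  moreover have "emeasure M ((U ^^ Suc k) -` X \<inter> space M) = emeasure M ((U ^^ k) -` (U -` X \<inter> space M) \<inter> space M)"
    by (simp only: e)
  ultimately show ?case using Suc.IH[OF s] by (simp only:)
qed

lemma Uup: assumes "p \<in> P" "Suc k < r p" "x \<in> D k p" shows "U x \<in> D (Suc k) p"
  using bij_betwE[OF bij_up[OF assms(1,2)]] assms(3) by blast

lemma Utop: assumes "p \<in> P" "x \<in> D (r p - 1) p" shows "U x \<in> B"
  using bij_betwE[OF bij_top[OF assms(1)]] assms(2) by blast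

lemma orbit: "p \<in> P \<Longrightarrow> x \<in> D 0 p \<Longrightarrow> k < r p \<Longrightarrow> (U ^^ k) x \<in> D k p"
proof (induction k)
  case (Suc k) then show ?case using Uup[of p k] by simp
qed simp

lemma top: "p \<in> P \<Longrightarrow> x \<in> D 0 p \<Longrightarrow> (U ^^ r p) x \<in> B"
proof -
  assume h: "p \<in> P" "x \<in> D 0 p"
  obtain m where m: "r p = Suc m" using r_pos[OF h(1)] by (cases "r p") auto
  have "(U ^^ m) x \<in> D (r p - 1) p" using orbit[OF h, of m] m by simp
  then show ?thesis using Utop[OF h(1)] m by simp
qed

lemma notB: "p \<in> P \<Longrightarrow> 0 < k \<Longrightarrow> k < r p \<Longrightarrow> y \<in> D k p \<Longrightarrow> y \<notin> B"
proof
  assume h: "p \<in> P" "0 < k" "k < r p" "y \<in> D k p" "y \<in> B"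
  then obtain q where q: "q \<in> P" "y \<in> D 0 q" by (auto simp: base_def)
  have "0 < r q" using r_pos[OF q(1)] by simp
  from uniq[OF h(1) h(3) q(1) this h(4) q(2)] h(2) show False by simp
qed

lemma ret: assumes h: "p \<in> P" "x \<in> D 0 p" shows "ret_time U B x = r p"
  unfolding ret_time_def
proof (rule Least_equality)
  show "0 < r p \<and> (U ^^ r p) x \<in> B" using top[OF h] r_pos[OF h(1)] by simp
  fix y assume y: "0 < y \<and> (U ^^ y) x \<in> B"
  show "r p \<le> y"
  proof (rule ccontr)
    assume "\<not> r p \<le> y"
    then have "y < r p" by simp
    then have "(U ^^ y) x \<in> D y p" using orbit[OF h] by blast
    moreover have "0 < y" using y by simp
    ultimately show False using notB[OF h(1) \<open>0 < y\<close> \<open>y < r p\<close>] y by simp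
  qed
qed

lemma ind: "p \<in> P \<Longrightarrow> x \<in> D 0 p \<Longrightarrow> induced U B x = (U ^^ r p) x"
  using ret by (simp add: induced_def)

lemma inB: "x \<in> B \<Longrightarrow> \<exists>p\<in>P. x \<in> D 0 p" by (simp add: base_def)

lemma ind_B: assumes "x \<in> B" shows "induced U B x \<in> B"
proof -
  obtain p where p: "p \<in> P" "x \<in> D 0 p" using inB[OF assms] by blast
  show ?thesis unfolding ind[OF p] by (rule top[OF p])
qed


lemma pre_Suc: "(U ^^ Suc k) -` X \<inter> space M = (U ^^ k) -` (U -` X \<inter> space M) \<inter> space M"
  using funpow_space[of _ k] by auto

lemma pre_up: assumes h: "p \<in> P" "Suc k < r p" shows "U -` D (Suc k) p \<inter> space M = D k p"
proof
  have "k < r p" using h by simp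
  then have "D k p \<subseteq> space M" using Dspace[OF h(1)] by blast
  then show "D k p \<subseteq> U -` D (Suc k) p \<inter> space M"
    using Uup[OF h] by auto
  show "U -` D (Suc k) p \<inter> space M \<subseteq> D k p"
  proof
    fix x assume x: "x \<in> U -` D (Suc k) p \<inter> space M"
    then have "\<exists>!(k, p). p \<in> P \<and> k < r p \<and> x \<in> D k p" using part by blast
    then obtain j q where jq: "q \<in> P" "j < r q" "x \<in> D j q" by auto
    show "x \<in> D k p"
    proof (cases "Suc j < r q")
      case True
      then have "U x \<in> D (Suc j) q" using Uup[OF jq(1) True jq(3)] by simp
      moreover have "U x \<in> D (Suc k) p" using x by simp
      ultimately have "Suc k = Suc j \<and> p = q" using uniq[OF h(1) h(2) jq(1) True] by simp
      then show ?thesis using jq(3) by simp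
    next
      case False
      then have "j = r q - 1" using jq by simp
      then have "U x \<in> B" using Utop[OF jq(1)] jq(3) by simp
      moreover have "U x \<in> D (Suc k) p" using x by simp
      ultimately show ?thesis using notB[OF h(1) _ h(2)] by simp
    qed
  qed
qed

lemma pre_iter: "p \<in> P \<Longrightarrow> k < r p \<Longrightarrow> (U ^^ k) -` D k p \<inter> space M = D 0 p"
proof (induction k)
  case 0 then show ?case using Dspace[OF 0(1) 0(2)] by auto
next
  case (Suc k)
  have a: "U -` D (Suc k) p \<inter> space M = D k p" by (rule pre_up[OF Suc.prems])
  have "k < r p" using Suc.prems(2) by simp
  then have b: "(U ^^ k) -` D k p \<inter> space M = D 0 p" by (rule Suc.IH[OF Suc.prems(1)])
  have "(U ^^ Suc k) -` D (Suc k) p \<inter> space M = (U ^^ k) -` (U -` D (Suc k) p \<inter> space M) \<inter> space M"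
    by (rule pre_Suc)
  also have "\<dots> = D 0 p" unfolding a b ..
  finally show ?case .
qed

definition T where "T p = D (r p - 1) p"
definition G where "G p E = D 0 p \<inter> (U ^^ r p) -` E"

lemma T_sets: "p \<in> P \<Longrightarrow> T p \<in> sets M" unfolding T_def
proof -
  assume p: "p \<in> P"
  then have "r p - 1 < r p" using r_pos[OF p] by simp
  then show "D (r p - 1) p \<in> sets M" by (rule Dsets[OF p])
qed

lemma TU_sets: "p \<in> P \<Longrightarrow> E \<in> sets M \<Longrightarrow> T p \<inter> U -` E \<in> sets M"
proof -
  assume h: "p \<in> P" "E \<in> sets M"
  have sp: "T p \<subseteq> space M" using sets.sets_into_space[OF T_sets[OF h(1)]] .
  have "T p \<inter> U -` E = T p \<inter> (U -` E \<inter> space M)" using sp by auto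
  moreover have "T p \<inter> (U -` E \<inter> space M) \<in> sets M"
    using T_sets[OF h(1)] measurable_sets[OF Umeas h(2)] by (rule sets.Int)
  ultimately show "T p \<inter> U -` E \<in> sets M" by simp
qed

lemma G_eq: "p \<in> P \<Longrightarrow> G p E = (U ^^ (r p - 1)) -` (T p \<inter> U -` E) \<inter> space M"
proof -
  assume h: "p \<in> P"
  obtain m where m: "r p = Suc m" using r_pos[OF h] by (cases "r p") auto
  have d: "(U ^^ m) -` T p \<inter> space M = D 0 p" using pre_iter[OF h, of m] m by (simp add: T_def)
  have e: "(U ^^ r p) -` E \<inter> space M = (U ^^ m) -` (U -` E \<inter> space M) \<inter> space M"
    unfolding m by (rule pre_Suc)
  have sp: "T p \<subseteq> space M" using sets.sets_into_space[OF T_sets[OF h]] .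
  have "G p E = D 0 p \<inter> ((U ^^ r p) -` E \<inter> space M)"
    unfolding G_def using Dspace[OF h, of 0] r_pos[OF h] by auto
  also have "\<dots> = ((U ^^ m) -` T p \<inter> space M) \<inter> ((U ^^ m) -` (U -` E \<inter> space M) \<inter> space M)"
    unfolding e d ..
  also have "\<dots> = (U ^^ m) -` (T p \<inter> U -` E) \<inter> space M"
    using sp by auto
  finally have fin: "G p E = (U ^^ m) -` (T p \<inter> U -` E) \<inter> space M" .
  have "r p - 1 = m" using m by simp
  then show ?thesis using fin by (simp only:)
qed

lemma G_sets: assumes h: "p \<in> P" "E \<in> sets M" shows "G p E \<in> sets M"
  unfolding G_eq[OF h(1)] by (rule measurable_sets[OF funpow_meas TU_sets[OF h]])

lemma G_meas: assumes h: "p \<in> P" "E \<in> sets M" shows "emeasure M (G p E) = emeasure M (T p \<inter> U -` E)"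
  unfolding G_eq[OF h(1)] by (rule funpow_pres[OF TU_sets[OF h]])

lemma G_sub: "G p E \<subseteq> D 0 p" unfolding G_def by auto

lemma decomp: "{x \<in> B. Q (ret_time U B x) \<and> induced U B x \<in> E} = (\<Union>p\<in>{p\<in>P. Q (r p)}. G p E)"
proof safe
  fix x assume x: "x \<in> B" "Q (ret_time U B x)" "induced U B x \<in> E"
  obtain p where p: "p \<in> P" "x \<in> D 0 p" using inB[OF x(1)] by blast
  have "Q (r p)" using x(2) unfolding ret[OF p] .
  moreover have "x \<in> G p E" using x(3) p(2) unfolding ind[OF p] G_def by simp
  ultimately show "x \<in> (\<Union>p\<in>{p\<in>P. Q (r p)}. G p E)" using p(1) by blast
next
  fix x p assume h: "p \<in> P" "Q (r p)" "x \<in> G p E"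
  then have p: "x \<in> D 0 p" unfolding G_def by simp
  show "x \<in> B" using h(1) p unfolding base_def by blast
  show "Q (ret_time U B x)" unfolding ret[OF h(1) p] by (rule h(2))
  show "induced U B x \<in> E" unfolding ind[OF h(1) p] using h(3) unfolding G_def by simp
qed

lemma pre_B: assumes E: "E \<subseteq> B" shows "U -` E \<inter> space M = (\<Union>p\<in>P. T p \<inter> U -` E)"
proof safe
  fix x assume x: "x \<in> space M" "U x \<in> E"
  then have "\<exists>!(k, p). p \<in> P \<and> k < r p \<and> x \<in> D k p" using part by blast
  then obtain j q where jq: "q \<in> P" "j < r q" "x \<in> D j q" by auto
  have "j = r q - 1"
  proof (rule ccontr)
    assume "j \<noteq> r q - 1"
    then have s: "Suc j < r q" using jq by simp
    then have "U x \<in> D (Suc j) q" using Uup[OF jq(1) s jq(3)] by simp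
    moreover have "U x \<in> B" using x(2) E by blast
    ultimately show False using notB[OF jq(1) _ s] by simp
  qed
  then have "x \<in> T q" unfolding T_def using jq(3) by simp
  then show "x \<in> (\<Union>p\<in>P. T p \<inter> U -` E)" using jq(1) x(2) by blast
next
  fix x p assume "p \<in> P" "x \<in> T p"
  then show "x \<in> space M" using sets.sets_into_space[OF T_sets] by blast
qed simp

lemma T_disj: "disjoint_family_on (\<lambda>p. T p \<inter> X p) P"
  unfolding disjoint_family_on_def
proof (intro ballI impI)
  fix p q assume h: "p \<in> P" "q \<in> P" "p \<noteq> q"
  have a: "r p - 1 < r p" "r q - 1 < r q" using r_pos h by (simp_all add: Suc_le_eq)
  show "T p \<inter> X p \<inter> (T q \<inter> X q) = {}"
  proof (rule ccontr)
    assume "T p \<inter> X p \<inter> (T q \<inter> X q) \<noteq> {}"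
    then obtain x where "x \<in> D (r p - 1) p" "x \<in> D (r q - 1) q" unfolding T_def by blast
    from uniq[OF h(1) a(1) h(2) a(2) this] h(3) show False by simp
  qed
qed

lemma G_disj: "disjoint_family_on (\<lambda>p. G p E) P"
  unfolding disjoint_family_on_def
proof (intro ballI impI)
  fix p q assume h: "p \<in> P" "q \<in> P" "p \<noteq> q"
  have a: "0 < r p" "0 < r q" using r_pos h by (simp_all add: Suc_le_eq)
  show "G p E \<inter> G q E = {}"
  proof (rule ccontr)
    assume "G p E \<inter> G q E \<noteq> {}"
    then obtain x where "x \<in> D 0 p" "x \<in> D 0 q" unfolding G_def by blast
    from uniq[OF h(1) a(1) h(2) a(2) this] h(3) show False by simp
  qed
qed


lemma T_disj': "disjoint_family_on T P"
  using T_disj[of "\<lambda>_. UNIV"] by simp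

lemma UT: "p \<in> P \<Longrightarrow> U ` T p = B"
  unfolding T_def using bij_top by (rule bij_betw_imp_surj_on)

lemma jac_bound:
  assumes c: "c \<ge> 0" "\<And>p k x y. p \<in> P \<Longrightarrow> k < r p \<Longrightarrow> x \<in> D k p \<Longrightarrow> y \<in> D k p \<Longrightarrow> J x \<le> (1 + c) * J y"
    and p: "p \<in> P" and E: "E \<in> sets M" "E \<subseteq> B"
  shows "emeasure M (T p \<inter> U -` E) * emeasure M B \<le> ennreal (1 + c) * emeasure M (T p) * emeasure M E"
proof -
  define G where "G = T p \<inter> U -` E"
  have k: "r p - 1 < r p" using r_pos[OF p] by simp
  have Gs: "G \<in> sets M" unfolding G_def by (rule TU_sets[OF p E(1)])
  have Ts: "T p \<in> sets M" by (rule T_sets[OF p])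
  note [measurable] = Gs Ts Jmeas
  have GT: "G \<subseteq> T p" unfolding G_def by blast
  have UG: "U ` G = E"
  proof
    show "U ` G \<subseteq> E" unfolding G_def by blast
    show "E \<subseteq> U ` G"
    proof
      fix e assume e: "e \<in> E"
      then have "e \<in> U ` T p" using UT[OF p] E(2) by blast
      then obtain t where "t \<in> T p" "e = U t" by blast
      then show "e \<in> U ` G" using e unfolding G_def by blast
    qed
  qed
  have jE: "emeasure M E = (\<integral>\<^sup>+ x\<in>G. ennreal (1 / J x) \<partial>M)"
    using jac[OF p k Gs] GT UG unfolding T_def by simp
  have jB: "emeasure M B = (\<integral>\<^sup>+ x\<in>T p. ennreal (1 / J x) \<partial>M)"
    using jac[OF p k Ts] UT[OF p] unfolding T_def by simp
  have Tsp: "T p \<subseteq> space M" using sets.sets_into_space[OF Ts] .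
  have Jp: "\<And>x. x \<in> T p \<Longrightarrow> J x > 0" using Jpos Tsp by blast
  have dist: "\<And>x y. x \<in> T p \<Longrightarrow> y \<in> T p \<Longrightarrow> J y \<le> (1 + c) * J x"
    using c(2)[OF p k] unfolding T_def by blast
  have key: "ennreal (J y) * emeasure M B \<le> ennreal (1 + c) * emeasure M (T p)" if y: "y \<in> T p" for y
  proof -
    have "ennreal (J y) * emeasure M B = (\<integral>\<^sup>+ x. ennreal (J y) * (ennreal (1 / J x) * indicator (T p) x) \<partial>M)"
      unfolding jB by (rule nn_integral_cmult[symmetric]) measurable
    also have "\<dots> \<le> (\<integral>\<^sup>+ x. ennreal (1 + c) * indicator (T p) x \<partial>M)"
    proof (rule nn_integral_mono)
      fix x assume "x \<in> space M"
      show "ennreal (J y) * (ennreal (1 / J x) * indicator (T p) x) \<le> ennreal (1 + c) * indicator (T p) x"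
      proof (cases "x \<in> T p")
        case True
        have jx: "J x > 0" using Jp[OF True] .
        have jy: "J y > 0" using Jp[OF y] .
        have "J y * (1 / J x) \<le> 1 + c" using dist[OF True y] jx by (simp add: divide_le_eq)
        then have le: "ennreal (J y * (1 / J x)) \<le> ennreal (1 + c)" by (rule ennreal_leI)
        have eq: "ennreal (J y) * ennreal (1 / J x) = ennreal (J y * (1 / J x))"
          by (rule ennreal_mult[symmetric]) (use jx jy in auto)
        have "ennreal (J y) * ennreal (1 / J x) \<le> ennreal (1 + c)" unfolding eq by (rule le)
        then show ?thesis using True by (simp add: mult.assoc[symmetric])
      qed simp
    qed
    also have "\<dots> = ennreal (1 + c) * emeasure M (T p)" by (rule nn_integral_cmult_indicator[OF Ts])
    finally show ?thesis .
  qed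
  have "emeasure M G * emeasure M B = (\<integral>\<^sup>+ x. indicator G x * emeasure M B \<partial>M)"
    by (simp add: nn_integral_multc)
  also have "\<dots> \<le> (\<integral>\<^sup>+ x. (ennreal (1 + c) * emeasure M (T p)) * (ennreal (1 / J x) * indicator G x) \<partial>M)"
  proof (rule nn_integral_mono)
    fix x assume "x \<in> space M"
    show "indicator G x * emeasure M B \<le> (ennreal (1 + c) * emeasure M (T p)) * (ennreal (1 / J x) * indicator G x)"
    proof (cases "x \<in> G")
      case True
      then have xT: "x \<in> T p" using GT by blast
      have jx: "J x > 0" using Jp[OF xT] .
      have one: "ennreal (J x) * ennreal (1 / J x) = 1" using jx by (simp add: ennreal_mult[symmetric])
      have "emeasure M B = (ennreal (J x) * emeasure M B) * ennreal (1 / J x)"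
        using one by (metis mult.assoc mult.commute mult_1)
      also have "\<dots> \<le> (ennreal (1 + c) * emeasure M (T p)) * ennreal (1 / J x)"
        by (rule mult_right_mono[OF key[OF xT]]) simp
      finally show ?thesis using True by simp
    qed simp
  qed
  also have "\<dots> = (ennreal (1 + c) * emeasure M (T p)) * emeasure M E"
    unfolding jE by (rule nn_integral_cmult) measurable
  finally show ?thesis unfolding G_def by (simp add: mult.assoc)
qed


lemma decomp_meas:
  assumes E: "E \<in> sets M" "E \<subseteq> B"
  shows "{x \<in> B. Q (ret_time U B x) \<and> induced U B x \<in> E} \<in> sets M"
    and "emeasure M {x \<in> B. Q (ret_time U B x) \<and> induced U B x \<in> E}
           = (\<integral>\<^sup>+ p. emeasure M (T p \<inter> U -` E) \<partial>count_space {p\<in>P. Q (r p)})"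
proof -
  have cnt: "countable {p\<in>P. Q (r p)}" by (rule countableI_type)
  have gs: "\<And>p. p \<in> {p\<in>P. Q (r p)} \<Longrightarrow> G p E \<in> sets M" using G_sets E(1) by blast
  show "{x \<in> B. Q (ret_time U B x) \<and> induced U B x \<in> E} \<in> sets M"
    unfolding decomp by (rule sets.countable_UN''[OF cnt gs])
  have dj: "disjoint_family_on (\<lambda>p. G p E) {p\<in>P. Q (r p)}"
    by (rule disjoint_family_on_mono[OF _ G_disj]) blast
  have "emeasure M {x \<in> B. Q (ret_time U B x) \<and> induced U B x \<in> E}
      = (\<integral>\<^sup>+ p. emeasure M (G p E) \<partial>count_space {p\<in>P. Q (r p)})"
    unfolding decomp by (rule emeasure_UN_countable[OF gs cnt dj])
  also have "\<dots> = (\<integral>\<^sup>+ p. emeasure M (T p \<inter> U -` E) \<partial>count_space {p\<in>P. Q (r p)})"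
    by (rule nn_integral_cong) (simp add: G_meas E(1))
  finally show "emeasure M {x \<in> B. Q (ret_time U B x) \<and> induced U B x \<in> E}
           = (\<integral>\<^sup>+ p. emeasure M (T p \<inter> U -` E) \<partial>count_space {p\<in>P. Q (r p)})" .
qed

lemma inv_meas:
  assumes E: "E \<in> sets M" "E \<subseteq> B"
  shows "emeasure M {x \<in> B. True \<and> induced U B x \<in> E} = emeasure M E"
proof -
  have cnt: "countable {p\<in>P. True}" by (rule countableI_type)
  have ts: "\<And>p. p \<in> {p\<in>P. True} \<Longrightarrow> T p \<inter> U -` E \<in> sets M" using TU_sets E(1) by blast
  have dj: "disjoint_family_on (\<lambda>p. T p \<inter> U -` E) {p\<in>P. True}" using T_disj by simp
  have "emeasure M {x \<in> B. True \<and> induced U B x \<in> E}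
      = (\<integral>\<^sup>+ p. emeasure M (T p \<inter> U -` E) \<partial>count_space {p\<in>P. True})"
    by (rule decomp_meas(2)[OF E])
  also have "\<dots> = emeasure M (\<Union>p\<in>{p\<in>P. True}. T p \<inter> U -` E)"
    by (rule emeasure_UN_countable[OF ts cnt dj, symmetric])
  also have "(\<Union>p\<in>{p\<in>P. True}. T p \<inter> U -` E) = U -` E \<inter> space M"
    using pre_B[OF E(2)] by simp
  also have "emeasure M (U -` E \<inter> space M) = emeasure M E"
    using emeasure_distr[OF Umeas E(1)] Udistr by simp
  finally show ?thesis .
qed

lemma level_sets: "level P r D n \<in> sets M"
  unfolding level_def
  by (rule sets.countable_UN''[OF countableI_type]) (use Dsets in blast)

lemma ret_meas:
  assumes c: "c \<ge> 0" "\<And>p k x y. p \<in> P \<Longrightarrow> k < r p \<Longrightarrow> x \<in> D k p \<Longrightarrow> y \<in> D k p \<Longrightarrow> J x \<le> (1 + c) * J y"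
    and E: "E \<in> sets M" "E \<subseteq> B" and n: "0 < n"
  shows "emeasure M {x \<in> B. ret_time U B x = n \<and> induced U B x \<in> E} * emeasure M B
     \<le> ennreal (1 + c) * emeasure M E * emeasure M (level P r D (n - 1))"
proof -
  let ?Pn = "{p\<in>P. r p = n}"
  have cnt: "countable ?Pn" by (rule countableI_type)
  have ts: "\<And>p. p \<in> ?Pn \<Longrightarrow> T p \<in> sets M" using T_sets by blast
  have dj: "disjoint_family_on T ?Pn" by (rule disjoint_family_on_mono[OF _ T_disj']) blast
  have "emeasure M {x \<in> B. ret_time U B x = n \<and> induced U B x \<in> E} * emeasure M B
      = (\<integral>\<^sup>+ p. emeasure M (T p \<inter> U -` E) \<partial>count_space ?Pn) * emeasure M B"
    using decomp_meas(2)[OF E, of "\<lambda>k. k = n"] by simp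
  also have "\<dots> = (\<integral>\<^sup>+ p. emeasure M (T p \<inter> U -` E) * emeasure M B \<partial>count_space ?Pn)"
    by (rule nn_integral_multc[symmetric]) simp
  also have "\<dots> \<le> (\<integral>\<^sup>+ p. (ennreal (1 + c) * emeasure M E) * emeasure M (T p) \<partial>count_space ?Pn)"
  proof (rule nn_integral_mono)
    fix p assume "p \<in> space (count_space ?Pn)"
    then have p: "p \<in> P" by simp
    show "emeasure M (T p \<inter> U -` E) * emeasure M B \<le> (ennreal (1 + c) * emeasure M E) * emeasure M (T p)"
      using jac_bound[OF c p E] by (simp add: ac_simps)
  qed
  also have "\<dots> = (ennreal (1 + c) * emeasure M E) * (\<integral>\<^sup>+ p. emeasure M (T p) \<partial>count_space ?Pn)"
    by (rule nn_integral_cmult) simp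
  also have "(\<integral>\<^sup>+ p. emeasure M (T p) \<partial>count_space ?Pn) = emeasure M (\<Union>p\<in>?Pn. T p)"
    by (rule emeasure_UN_countable[OF ts cnt dj, symmetric])
  also have "\<dots> \<le> emeasure M (level P r D (n - 1))"
  proof (rule emeasure_mono[OF _ level_sets])
    show "(\<Union>p\<in>?Pn. T p) \<subseteq> level P r D (n - 1)"
      unfolding level_def T_def using n by auto
  qed
  finally show ?thesis by (simp add: mult_left_mono)
qed


lemma ret_meas_real:
  assumes c: "c \<ge> 0" "\<And>p k x y. p \<in> P \<Longrightarrow> k < r p \<Longrightarrow> x \<in> D k p \<Longrightarrow> y \<in> D k p \<Longrightarrow> J x \<le> (1 + c) * J y"
    and E: "E \<in> sets M" "E \<subseteq> B" and n: "0 < n"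
  shows "measure M {x \<in> B. ret_time U B x = n \<and> induced U B x \<in> E} * measure M B
     \<le> (1 + c) * measure M E * measure M (level P r D (n - 1))"
proof -
  let ?S = "{x \<in> B. ret_time U B x = n \<and> induced U B x \<in> E}"
  have l: "ennreal (measure M ?S * measure M B) = ennreal (measure M ?S) * ennreal (measure M B)"
    by (rule ennreal_mult'') simp
  have r: "ennreal ((1 + c) * measure M E * measure M (level P r D (n - 1)))
      = ennreal (1 + c) * ennreal (measure M E) * ennreal (measure M (level P r D (n - 1)))"
    using c(1) by (simp add: ennreal_mult)
  have "ennreal (measure M ?S * measure M B) \<le> ennreal ((1 + c) * measure M E * measure M (level P r D (n - 1)))"
    unfolding l r using ret_meas[OF c E n] by (simp add: emeasure_eq_measure)
  moreover have "0 \<le> (1 + c) * measure M E * measure M (level P r D (n - 1))" using c(1) by simp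
  ultimately show ?thesis by simp
qed

lemma inv_meas_real:
  assumes E: "E \<in> sets M" "E \<subseteq> B"
  shows "measure M {x \<in> B. True \<and> induced U B x \<in> E} = measure M E"
  using inv_meas[OF E] by (simp add: emeasure_eq_measure)

lemma S_split:
  assumes F: "F \<subseteq> {..<Suc m}"
  shows "{x \<in> B. \<forall>i\<in>F. ret_time U B ((induced U B ^^ i) x) = ns i}
       = {x \<in> B. (0 \<in> F \<longrightarrow> ret_time U B x = ns 0) \<and> induced U B x \<in>
            {x \<in> B. \<forall>i\<in>{i. Suc i \<in> F}. ret_time U B ((induced U B ^^ i) x) = ns (Suc i)}}"
    (is "?L = ?R")
proof
  show "?L \<subseteq> ?R"
  proof
    fix x assume x: "x \<in> ?L"
    then have xB: "x \<in> B" by simp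
    have "\<forall>i\<in>{i. Suc i \<in> F}. ret_time U B ((induced U B ^^ i) (induced U B x)) = ns (Suc i)"
    proof
      fix i assume "i \<in> {i. Suc i \<in> F}"
      then have "ret_time U B ((induced U B ^^ Suc i) x) = ns (Suc i)" using x by blast
      then show "ret_time U B ((induced U B ^^ i) (induced U B x)) = ns (Suc i)"
        by (simp only: funpow_Suc_right comp_def)
    qed
    moreover have "ret_time U B x = ns 0" if "0 \<in> F"
    proof -
      have "ret_time U B ((induced U B ^^ 0) x) = ns 0" using x that by blast
      then show ?thesis by simp
    qed
    ultimately show "x \<in> ?R" using xB ind_B[OF xB] by simp
  qed
  show "?R \<subseteq> ?L"
  proof
    fix x assume x: "x \<in> ?R"
    then have xB: "x \<in> B" by simp
    have "ret_time U B ((induced U B ^^ i) x) = ns i" if i: "i \<in> F" for i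
    proof (cases i)
      case 0 then show ?thesis using x i by simp
    next
      case (Suc j)
      then have "Suc j \<in> F" using i by simp
      then have "ret_time U B ((induced U B ^^ j) (induced U B x)) = ns (Suc j)" using x by simp
      then show ?thesis unfolding Suc by (simp only: funpow_Suc_right comp_def)
    qed
    then show "x \<in> ?L" using xB by simp
  qed
qed

end

theorem lemmaA1:
  fixes M :: "'a measure" and U :: "'a \<Rightarrow> 'a" and P :: "nat set" and r :: "nat \<Rightarrow> nat"
    and D :: "nat \<Rightarrow> nat \<Rightarrow> 'a set" and J :: "'a \<Rightarrow> real" and C0 \<rho> :: real
  assumes "young_tower M U P r D J"
    and "0 < \<rho>" and "\<rho> < 1"
    and "\<And>n. measure M (level P r D n) \<le> C0 * \<rho> ^ n"
  shows "\<exists>C>0. \<forall>F :: nat set. \<forall>ns :: nat \<Rightarrow> nat. finite F \<longrightarrow> (\<forall>i\<in>F. 0 < ns i) \<longrightarrow>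
           measure M {x \<in> base P D. \<forall>i\<in>F.
              ret_time U (base P D) ((induced U (base P D) ^^ i) x) = ns i}
           \<le> (\<Prod>i\<in>F. C * \<rho> ^ ns i)"
proof -
  interpret tw M U P r D J by (rule tw.intro[OF assms(1)])
  obtain c where c: "c \<ge> 0" "\<And>p k x y. p \<in> P \<Longrightarrow> k < r p \<Longrightarrow> x \<in> D k p \<Longrightarrow> y \<in> D k p \<Longrightarrow> J x \<le> (1 + c) * J y"
    by (rule distortion) (rule that)
  define S where "S F ns = {x \<in> base P D. \<forall>i\<in>F. ret_time U (base P D) ((induced U (base P D) ^^ i) x) = ns i}"
    for F :: "nat set" and ns :: "nat \<Rightarrow> nat"
  have SB: "S F ns \<subseteq> base P D" for F ns unfolding S_def by blast
  show ?thesis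
  proof (cases "measure M (base P D) = 0")
    case True
    show ?thesis
    proof (intro exI[of _ 1] conjI allI impI)
      fix F :: "nat set" and ns :: "nat \<Rightarrow> nat"
      have "measure M (S F ns) \<le> measure M (base P D)" by (rule finite_measure_mono[OF SB B_sets])
      also have "\<dots> \<le> (\<Prod>i\<in>F. 1 * \<rho> ^ ns i)" using True assms(2) by (simp add: prod_nonneg)
      finally have "measure M (S F ns) \<le> (\<Prod>i\<in>F. 1 * \<rho> ^ ns i)" .
      then show "measure M {x \<in> base P D. \<forall>i\<in>F. ret_time U (base P D) ((induced U (base P D) ^^ i) x) = ns i}
           \<le> (\<Prod>i\<in>F. 1 * \<rho> ^ ns i)" unfolding S_def .
    qed simp
  next
    case False
    have mB: "measure M (base P D) > 0" using False measure_nonneg[of M "base P D"] by linarith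
    have rp: "0 < r p" if "p \<in> P" for p using r_pos[OF that] by simp
    then have "{p \<in> P. 0 < r p} = P" by blast
    then have l0: "level P r D 0 = base P D" unfolding level_def base_def by simp
    have C0: "C0 > 0" using assms(4)[of 0] mB l0 by simp
    define K where "K = (1 + c) * C0 / (\<rho> * measure M (base P D))"
    have K: "K > 0" unfolding K_def using c(1) C0 mB assms(2) by simp
    have main: "\<forall>F ns. F \<subseteq> {..<m} \<longrightarrow> (\<forall>i\<in>F. 0 < ns i) \<longrightarrow>
        S F ns \<in> sets M \<and> measure M (S F ns) \<le> (\<Prod>i\<in>F. K * \<rho> ^ ns i)" for m
    proof (induction m)
      case 0
      show ?case
      proof (intro allI impI)
        fix F :: "nat set" and ns :: "nat \<Rightarrow> nat" assume "F \<subseteq> {..<0}"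
        then have F: "F = {}" by simp
        have "S F ns = base P D" unfolding S_def F by simp
        then show "S F ns \<in> sets M \<and> measure M (S F ns) \<le> (\<Prod>i\<in>F. K * \<rho> ^ ns i)"
          using B_sets F by simp
      qed
    next
      case (Suc m)
      show ?case
      proof (intro allI impI)
        fix F :: "nat set" and ns :: "nat \<Rightarrow> nat"
        assume F: "F \<subseteq> {..<Suc m}" and pos: "\<forall>i\<in>F. 0 < ns i"
        define F' where "F' = {i. Suc i \<in> F}"
        define ns' where "ns' = (\<lambda>i. ns (Suc i))"
        have F'm: "F' \<subseteq> {..<m}" using F unfolding F'_def by auto
        have pos': "\<forall>i\<in>F'. 0 < ns' i" using pos unfolding F'_def ns'_def by simp
        define E where "E = S F' ns'"
        have IH0: "E \<in> sets M \<and> measure M E \<le> (\<Prod>i\<in>F'. K * \<rho> ^ ns' i)"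
          unfolding E_def by (rule Suc.IH[rule_format, OF F'm pos'[rule_format]])
        have IH: "E \<in> sets M" "measure M E \<le> (\<Prod>i\<in>F'. K * \<rho> ^ ns' i)"
          using IH0 by (rule conjunct1, rule conjunct2)
        have EB: "E \<subseteq> base P D" unfolding E_def by (rule SB)
        have split: "S F ns = {x \<in> base P D. (0 \<in> F \<longrightarrow> ret_time U (base P D) x = ns 0) \<and> induced U (base P D) x \<in> E}"
          unfolding S_def E_def F'_def ns'_def by (rule S_split[OF F])
        have img: "Suc ` F' = F - {0}" unfolding F'_def
        proof
          show "Suc ` {i. Suc i \<in> F} \<subseteq> F - {0}" by auto
          show "F - {0} \<subseteq> Suc ` {i. Suc i \<in> F}"
          proof
            fix x assume "x \<in> F - {0}"
            then have "x \<in> F" "x \<noteq> 0" by simp_all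
            then have "x = Suc (x - 1)" "Suc (x - 1) \<in> F" by simp_all
            then show "x \<in> Suc ` {i. Suc i \<in> F}" by blast
          qed
        qed
        have prodF': "(\<Prod>i\<in>F'. K * \<rho> ^ ns' i) = (\<Prod>i\<in>F - {0}. K * \<rho> ^ ns i)"
          unfolding img[symmetric] ns'_def by (simp add: prod.reindex)
        show "S F ns \<in> sets M \<and> measure M (S F ns) \<le> (\<Prod>i\<in>F. K * \<rho> ^ ns i)"
        proof (cases "0 \<in> F")
          case True
          have split': "S F ns = {x \<in> base P D. ret_time U (base P D) x = ns 0 \<and> induced U (base P D) x \<in> E}"
            using split True by simp
          have n: "0 < ns 0" using pos True by blast
          have sets: "S F ns \<in> sets M" unfolding split' by (rule decomp_meas(1)[OF IH(1) EB])
          have a: "measure M (S F ns) * measure M (base P D)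
              \<le> (1 + c) * measure M E * measure M (level P r D (ns 0 - 1))"
            unfolding split' by (rule ret_meas_real[OF c IH(1) EB n])
          also have "\<dots> \<le> (1 + c) * measure M E * (C0 * \<rho> ^ (ns 0 - 1))"
            by (rule mult_left_mono[OF assms(4)]) (use c(1) in simp)
          also have "\<dots> = (K * \<rho> ^ ns 0 * measure M E) * measure M (base P D)"
          proof -
            have e: "\<rho> ^ ns 0 = \<rho> * \<rho> ^ (ns 0 - 1)" using n by (cases "ns 0") simp_all
            have "\<rho> \<noteq> 0" "measure M (base P D) \<noteq> 0" using mB assms(2) by auto
            then show ?thesis unfolding K_def e by (simp add: field_simps)
          qed
          finally have "measure M (S F ns) * measure M (base P D) \<le> (K * \<rho> ^ ns 0 * measure M E) * measure M (base P D)" .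
          then have "measure M (S F ns) \<le> K * \<rho> ^ ns 0 * measure M E"
            by (rule mult_right_le_imp_le[OF _ mB])
          also have "\<dots> \<le> K * \<rho> ^ ns 0 * (\<Prod>i\<in>F'. K * \<rho> ^ ns' i)"
            by (rule mult_left_mono[OF IH(2)]) (use K assms(2) in simp)
          also have "\<dots> = (\<Prod>i\<in>F. K * \<rho> ^ ns i)"
          proof -
            have fin: "finite F" using finite_subset[OF F] by simp
            have "(\<Prod>i\<in>F. K * \<rho> ^ ns i) = K * \<rho> ^ ns 0 * (\<Prod>i\<in>F - {0}. K * \<rho> ^ ns i)"
              by (rule prod.remove[OF fin True])
            then show ?thesis unfolding prodF' by (rule sym)
          qed
          finally show ?thesis using sets by simp
        next
          case False
          have split': "S F ns = {x \<in> base P D. True \<and> induced U (base P D) x \<in> E}"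
            using split False by simp
          have sets: "S F ns \<in> sets M" unfolding split' by (rule decomp_meas(1)[OF IH(1) EB])
          have "measure M (S F ns) = measure M E" unfolding split' by (rule inv_meas_real[OF IH(1) EB])
          also have "\<dots> \<le> (\<Prod>i\<in>F. K * \<rho> ^ ns i)"
          proof -
            have "F - {0} = F" using False by simp
            then show ?thesis using IH(2) unfolding prodF' by simp
          qed
          finally show ?thesis using sets by simp
        qed
      qed
    qed
    show ?thesis
    proof (intro exI[of _ K] conjI allI impI)
      show "K > 0" by (rule K)
      fix F :: "nat set" and ns :: "nat \<Rightarrow> nat"
      assume "finite F" "\<forall>i\<in>F. 0 < ns i"
      moreover obtain m where "F \<subseteq> {..<m}" using finite_nat_bounded[OF \<open>finite F\<close>] by blast
      ultimately have "measure M (S F ns) \<le> (\<Prod>i\<in>F. K * \<rho> ^ ns i)" using main[of m] by blast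
      then show "measure M {x \<in> base P D. \<forall>i\<in>F. ret_time U (base P D) ((induced U (base P D) ^^ i) x) = ns i}
           \<le> (\<Prod>i\<in>F. K * \<rho> ^ ns i)" unfolding S_def .
    qed
  qed
qed

end
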